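(* Let $p_1,\dots,p_k\in\mathbb{K}[x_1,\dots,x_d]$ be pure difference binomials and let $L\subseteq\mathbb{Z}^d$ be the lattice spanned by their exponent vectors. There exists a linear loop with a diagonal update matrix $M\in\mathbb{Q}^{d\times d}$ (and initial vector in $\mathbb{Q}^d$) whose invariant ideal is $I_{\operatorname{Sat}(L)}$.
   Context: $\mathbb{K}=\overline{\mathbb{Q}}$. A pure difference binomial is $\bm{x}^{\bm{\alpha}}-\bm{x}^{\bm{\beta}}$ with $\bm{\alpha},\bm{\beta}\in\mathbb{N}^d$; its exponent vector is $\bm{\alpha}-\bm{\beta}$. $\operatorname{Sat}(L)=\{\bm{u}\in\mathbb{Z}^d : c\bm{u}\in L\text{ for some } c\in\mathbb{Z}\setminus\{0\}\}$; the lattice ideal of a lattice $L'$ is $I_{L'}=\langle \bm{x}^{\bm{\alpha}}-\bm{x}^{\bm{\beta}} : \bm{\alpha},\bm{\beta}\in\mathbb{N}^d,\ \bm{\alpha}-\bm{\beta}\in L'\rangle$. A linear loop with initial vector $\bm{s}$ and update matrix $M$ has orbit $M^n\bm{s}$, $n\ge0$; a polynomial $P\in\mathbb{K}[\bm{x}]$ is an invariant if $P(M^n\bm{s})=0$ for all $n\ge0$, and the invariant ideal is the ideal of all invariants. *)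

theory Defs
  imports "HOL-Library.Poly_Mapping" "HOL-Computational_Algebra.Polynomial" "Jordan_Normal_Form.Matrix"
begin

text \<open>The field K = algebraic closure of Q is rendered as the algebraic
  complex numbers; K[x_1..x_d] is the set of polynomials with algebraic coefficients
  whose monomials only involve the first d variables.\<close>

type_synonym mpoly = "(nat \<Rightarrow>\<^sub>0 nat) \<Rightarrow>\<^sub>0 complex"

definition mon_in_vars :: "nat \<Rightarrow> (nat \<Rightarrow>\<^sub>0 nat) \<Rightarrow> bool" where
  "mon_in_vars d m \<longleftrightarrow> Poly_Mapping.keys m \<subseteq> {..<d}"

definition Kpoly :: "nat \<Rightarrow> mpoly \<Rightarrow> bool" where
  "Kpoly d p \<longleftrightarrow> (\<forall>m\<in>Poly_Mapping.keys p. mon_in_vars d m) \<and> (\<forall>m. algebraic (Poly_Mapping.lookup p m))"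

definition monom :: "(nat \<Rightarrow>\<^sub>0 nat) \<Rightarrow> mpoly" where
  "monom a = Poly_Mapping.single a 1"

definition eval_mpoly :: "mpoly \<Rightarrow> (nat \<Rightarrow> complex) \<Rightarrow> complex" where
  "eval_mpoly p x = (\<Sum>m\<in>Poly_Mapping.keys p. Poly_Mapping.lookup p m * (\<Prod>i\<in>Poly_Mapping.keys m. x i ^ Poly_Mapping.lookup m i))"

definition gen_ideal :: "nat \<Rightarrow> mpoly set \<Rightarrow> mpoly set" where
  "gen_ideal d G = {p. \<exists>(n::nat) q g. (\<forall>i<n. Kpoly d (q i) \<and> g i \<in> G) \<and> p = (\<Sum>i<n. q i * g i)}"

definition exp_vec :: "(nat \<Rightarrow>\<^sub>0 nat) \<Rightarrow> (nat \<Rightarrow>\<^sub>0 nat) \<Rightarrow> nat \<Rightarrow> int" where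
  "exp_vec a b = (\<lambda>i. int (Poly_Mapping.lookup a i) - int (Poly_Mapping.lookup b i))"

definition zvec :: "nat \<Rightarrow> (nat \<Rightarrow> int) \<Rightarrow> bool" where
  "zvec d u \<longleftrightarrow> (\<forall>i\<ge>d. u i = 0)"

definition lattice_span :: "nat \<Rightarrow> (nat \<Rightarrow> nat \<Rightarrow> int) \<Rightarrow> (nat \<Rightarrow> int) set" where
  "lattice_span k v = {u. \<exists>c :: nat \<Rightarrow> int. u = (\<lambda>i. \<Sum>j<k. c j * v j i)}"

definition Sat :: "nat \<Rightarrow> (nat \<Rightarrow> int) set \<Rightarrow> (nat \<Rightarrow> int) set" where
  "Sat d L = {u. zvec d u \<and> (\<exists>c::int. c \<noteq> 0 \<and> (\<lambda>i. c * u i) \<in> L)}"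

definition lattice_ideal :: "nat \<Rightarrow> (nat \<Rightarrow> int) set \<Rightarrow> mpoly set" where
  "lattice_ideal d L' = gen_ideal d {monom a - monom b | a b.
      mon_in_vars d a \<and> mon_in_vars d b \<and> exp_vec a b \<in> L'}"

definition invariant_ideal :: "nat \<Rightarrow> rat mat \<Rightarrow> rat vec \<Rightarrow> mpoly set" where
  "invariant_ideal d M s = {P. Kpoly d P \<and>
     (\<forall>n. eval_mpoly P (\<lambda>i. if i < d then of_rat (((M ^\<^sub>m n) *\<^sub>v s) $ i) else 0) = 0)}"

end

theory Submission
  imports Defs "HOL-Computational_Algebra.Primes"
begin


interpretation QV: vector_space "\<lambda>(q::rat) (z::complex). of_rat q * z"
  by unfold_locales (auto simp: algebra_simps of_rat_add of_rat_mult)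

lemma span_scale': "w \<in> QV.span S \<Longrightarrow> of_rat c * w \<in> QV.span S"
  using QV.span_scale[of w S c] by simp

lemma span_mult_closed:
  assumes "\<And>b. b \<in> B \<Longrightarrow> x * b \<in> QV.span B" and "w \<in> QV.span B"
  shows "x * w \<in> QV.span B"
  using assms(2)
proof (induction rule: QV.span_induct_alt)
  case base then show ?case by (simp add: QV.span_zero)
next
  case (step c b w)
  have "x * (of_rat c * b + w) = of_rat c * (x * b) + x * w" by (simp add: algebra_simps)
  then show ?case using step assms(1) QV.span_add QV.span_scale by metis
qed

lemma algebraic_of_span:
  fixes z :: complex
  assumes fin: "finite B" and sp: "\<And>l. z ^ l \<in> QV.span B"
  shows "algebraic z"
proof (cases "inj_on (\<lambda>l. z ^ l) {..card B}")
  case True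
  define A where "A = (\<lambda>l. z ^ l) ` {..card B}"
  have cA: "card A = Suc (card B)" unfolding A_def using True by (simp add: card_image)
  have AB: "A \<subseteq> QV.span B" unfolding A_def using sp by auto
  have dep: "QV.dependent A"
  proof (rule ccontr)
    assume ind: "\<not> QV.dependent A"
    have "card A \<le> card B" using QV.independent_span_bound[OF fin ind AB] by simp
    then show False using cA by simp
  qed
  from dep obtain t u where t: "finite t" "t \<subseteq> A" "(\<Sum>v\<in>t. of_rat (u v) * v) = 0"
      and v0: "\<exists>v0\<in>t. u v0 \<noteq> 0"
    unfolding QV.dependent_explicit by auto
  then obtain v0 where v0: "v0 \<in> t" "u v0 \<noteq> 0" by blast
  define I where "I = {l \<in> {..card B}. z ^ l \<in> t}"
  have tI: "t = (\<lambda>l. z ^ l) ` I" using t(2) unfolding I_def A_def by blast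
  have injI: "inj_on (\<lambda>l. z ^ l) I" using True unfolding I_def by (rule inj_on_subset) blast
  obtain l0 where l0: "l0 \<in> I" "z ^ l0 = v0" using v0 tI by blast
  define p where "p = (\<Sum>l\<in>I. Polynomial.monom (of_rat (u (z ^ l)) :: complex) l)"
  have fI: "finite I" unfolding I_def by auto
  have cp: "coeff p i = (if i \<in> I then of_rat (u (z ^ i)) else 0)" for i
    unfolding p_def coeff_sum coeff_monom using fI by (simp add: sum.delta)
  have "coeff p i \<in> \<rat>" for i unfolding cp by simp
  moreover have "p \<noteq> 0"
  proof
    assume "p = 0"
    then have "coeff p l0 = 0" by simp
    then show False using cp[of l0] l0 v0 by simp
  qed
  moreover have "poly p z = 0"
  proof -
    have "poly p z = (\<Sum>l\<in>I. of_rat (u (z ^ l)) * z ^ l)"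
      unfolding p_def poly_sum poly_monom by simp
    also have "\<dots> = (\<Sum>v\<in>t. of_rat (u v) * v)"
      unfolding tI by (rule sum.reindex[OF injI, symmetric, unfolded comp_def])
    finally show ?thesis using t(3) by simp
  qed
  ultimately show ?thesis unfolding algebraic_altdef by blast
next
  case False
  then obtain a b where ab: "a \<le> card B" "b \<le> card B" "a \<noteq> b" "z ^ a = z ^ b"
    unfolding inj_on_def by auto
  define p where "p = Polynomial.monom (1::complex) a - Polynomial.monom 1 b"
  have "coeff p i \<in> \<rat>" for i unfolding p_def by auto
  moreover have "p \<noteq> 0"
  proof
    assume "p = 0"
    then have "coeff p a = 0" by simp
    then show False using ab unfolding p_def by simp
  qed
  moreover have "poly p z = 0" unfolding p_def using ab by (simp add: poly_monom)
  ultimately show ?thesis unfolding algebraic_altdef by blast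
qed

lemma algebraic_top_power:
  fixes x :: complex
  assumes "algebraic x"
  obtains n r where "n \<ge> 1" "x ^ n = (\<Sum>k<n. of_rat (r k) * x ^ k)"
proof -
  obtain p where p: "\<And>i. coeff p i \<in> \<int>" "p \<noteq> 0" "poly p x = 0"
    using algebraicE[OF assms] by blast
  define n where "n = degree p"
  have "\<forall>i. \<exists>c::int. coeff p i = of_int c" using p(1) Ints_cases by metis
  then obtain f where f: "\<And>i. coeff p i = of_int (f i)" by metis
  have lc: "f n \<noteq> 0" using p(2) f[of n] unfolding n_def by (metis leading_coeff_0_iff of_int_0)
  have n1: "n \<ge> 1"
  proof (rule ccontr)
    assume "\<not> n \<ge> 1"
    then have "n = 0" by simp
    then have "poly p x = coeff p 0" unfolding n_def by (simp add: poly_altdef)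
    then show False using p(3) lc f[of 0] \<open>n = 0\<close> by simp
  qed
  have "0 = (\<Sum>i\<le>n. coeff p i * x ^ i)" using p(3) unfolding n_def poly_altdef by simp
  also have "\<dots> = (\<Sum>i<n. coeff p i * x ^ i) + coeff p n * x ^ n"
    by (simp add: lessThan_Suc_atMost[symmetric])
  finally have eq: "of_int (f n) * x ^ n = - (\<Sum>i<n. of_int (f i) * x ^ i)" unfolding f
    by (simp add: eq_neg_iff_add_eq_0 add.commute)
  define r where "r k = - (of_int (f k) / of_int (f n) :: rat)" for k
  have "x ^ n = (\<Sum>k<n. of_rat (r k) * x ^ k)"
  proof -
    have fn: "(of_int (f n) :: complex) \<noteq> 0" using lc by simp
    have "x ^ n = - (\<Sum>i<n. of_int (f i) * x ^ i) / of_int (f n)"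
      using eq fn by (metis nonzero_mult_div_cancel_left)
    also have "\<dots> = (\<Sum>k<n. - (of_int (f k) / of_int (f n)) * x ^ k)"
      by (simp add: sum_divide_distrib flip: sum_negf)
    also have "\<dots> = (\<Sum>k<n. of_rat (r k) * x ^ k)"
      unfolding r_def by (simp add: of_rat_minus of_rat_divide)
    finally show ?thesis .
  qed
  then show ?thesis using that n1 by blast
qed

lemma algebraic_plus_times:
  fixes x y :: complex
  assumes ax: "algebraic x" and ay: "algebraic y"
  shows "algebraic (x + y) \<and> algebraic (x * y)"
proof -
  obtain n r where n: "n \<ge> 1" "x ^ n = (\<Sum>k<n. of_rat (r k) * x ^ k)"
    using algebraic_top_power[OF ax] by blast
  obtain m s where m: "m \<ge> 1" "y ^ m = (\<Sum>k<m. of_rat (s k) * y ^ k)"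
    using algebraic_top_power[OF ay] by blast
  define B where "B = (\<lambda>(i,j). x ^ i * y ^ j) ` ({..<n} \<times> {..<m})"
  have fin: "finite B" unfolding B_def by auto
  have inB: "x ^ i * y ^ j \<in> B" if "i < n" "j < m" for i j
    unfolding B_def using that by force
  have X: "x * b \<in> QV.span B" if "b \<in> B" for b
  proof -
    obtain i j where ij: "i < n" "j < m" "b = x ^ i * y ^ j" using \<open>b \<in> B\<close> unfolding B_def by auto
    show ?thesis
    proof (cases "Suc i < n")
      case True
      then have "x * b = x ^ Suc i * y ^ j" using ij by simp
      then show ?thesis using inB[OF True ij(2)] QV.span_base by metis
    next
      case False
      then have "Suc i = n" using ij by simp
      then have "x * b = x ^ n * y ^ j" using ij by (metis mult.assoc power_Suc)
      also have "\<dots> = (\<Sum>k<n. of_rat (r k) * (x ^ k * y ^ j))"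
        unfolding n(2) by (simp add: sum_distrib_right mult.assoc)
      finally have eq: "x * b = (\<Sum>k<n. of_rat (r k) * (x ^ k * y ^ j))" .
      have "(\<Sum>k<n. of_rat (r k) * (x ^ k * y ^ j)) \<in> QV.span B"
        by (rule QV.span_sum, rule span_scale', rule QV.span_base, use inB ij in auto)
      then show ?thesis using eq by simp
    qed
  qed
  have Y: "y * b \<in> QV.span B" if "b \<in> B" for b
  proof -
    obtain i j where ij: "i < n" "j < m" "b = x ^ i * y ^ j" using \<open>b \<in> B\<close> unfolding B_def by auto
    show ?thesis
    proof (cases "Suc j < m")
      case True
      then have "y * b = x ^ i * y ^ Suc j" using ij by (simp add: algebra_simps)
      then show ?thesis using inB[OF ij(1) True] QV.span_base by metis
    next
      case False
      then have "Suc j = m" using ij by simp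
      then have "y * b = x ^ i * y ^ m" using ij by (metis mult.left_commute power_Suc)
      also have "\<dots> = (\<Sum>k<m. of_rat (s k) * (x ^ i * y ^ k))"
        unfolding m(2) by (simp add: sum_distrib_left algebra_simps)
      finally have eq: "y * b = (\<Sum>k<m. of_rat (s k) * (x ^ i * y ^ k))" .
      have "(\<Sum>k<m. of_rat (s k) * (x ^ i * y ^ k)) \<in> QV.span B"
        by (rule QV.span_sum, rule span_scale', rule QV.span_base, use inB ij in auto)
      then show ?thesis using eq by simp
    qed
  qed
  have one: "1 \<in> QV.span B" using inB[of 0 0] n(1) m(1) QV.span_base by force
  have "(x + y) ^ l \<in> QV.span B" for l
  proof (induction l)
    case 0 then show ?case using one by simp
  next
    case (Suc l)
    have "(x + y) ^ Suc l = x * (x + y) ^ l + y * (x + y) ^ l" by (simp add: algebra_simps)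
    then show ?case using span_mult_closed[OF X Suc] span_mult_closed[OF Y Suc] QV.span_add by metis
  qed
  moreover have "(x * y) ^ l \<in> QV.span B" for l
  proof (induction l)
    case 0 then show ?case using one by simp
  next
    case (Suc l)
    have "(x * y) ^ Suc l = x * (y * (x * y) ^ l)" by (simp add: algebra_simps)
    then show ?case using span_mult_closed[OF X span_mult_closed[OF Y Suc]] by metis
  qed
  ultimately show ?thesis using algebraic_of_span[OF fin] by blast
qed

lemma algebraic_sum: "finite A \<Longrightarrow> (\<And>a. a \<in> A \<Longrightarrow> algebraic (f a :: complex)) \<Longrightarrow> algebraic (sum f A)"
  by (induction A rule: finite_induct) (auto simp: algebraic_plus_times)



definition chi :: "(nat \<Rightarrow> complex) \<Rightarrow> (nat \<Rightarrow>\<^sub>0 nat) \<Rightarrow> complex" where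
  "chi x m = (\<Prod>i\<in>Poly_Mapping.keys m. x i ^ Poly_Mapping.lookup m i)"

lemma chi_superset: "finite S \<Longrightarrow> Poly_Mapping.keys m \<subseteq> S \<Longrightarrow>
   chi x m = (\<Prod>i\<in>S. x i ^ Poly_Mapping.lookup m i)"
  unfolding chi_def by (rule prod.mono_neutral_left) (auto simp: in_keys_iff)

lemma chi_add: "chi x (a + b) = chi x a * chi x b"
proof -
  let ?S = "Poly_Mapping.keys a \<union> Poly_Mapping.keys b"
  have "chi x (a + b) = (\<Prod>i\<in>?S. x i ^ Poly_Mapping.lookup (a + b) i)"
    by (rule chi_superset) (auto simp: keys_add)
  also have "\<dots> = (\<Prod>i\<in>?S. x i ^ Poly_Mapping.lookup a i) * (\<Prod>i\<in>?S. x i ^ Poly_Mapping.lookup b i)"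
    by (simp add: lookup_add power_add prod.distrib)
  also have "\<dots> = chi x a * chi x b"
    by (subst (1 2) chi_superset[of ?S]) auto
  finally show ?thesis .
qed

lemma chi_zero [simp]: "chi x 0 = 1" unfolding chi_def by simp

lemma eval_chi: "eval_mpoly P x = (\<Sum>m\<in>Poly_Mapping.keys P. Poly_Mapping.lookup P m * chi x m)"
  unfolding eval_mpoly_def chi_def ..

lemma eval_superset: "finite S \<Longrightarrow> Poly_Mapping.keys P \<subseteq> S \<Longrightarrow>
   eval_mpoly P x = (\<Sum>m\<in>S. Poly_Mapping.lookup P m * chi x m)"
  unfolding eval_chi by (rule sum.mono_neutral_left) (auto simp: in_keys_iff)

lemma eval_add: "eval_mpoly (P + Q) x = eval_mpoly P x + eval_mpoly Q x"
proof -
  let ?S = "Poly_Mapping.keys P \<union> Poly_Mapping.keys Q"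
  have "eval_mpoly (P + Q) x = (\<Sum>m\<in>?S. Poly_Mapping.lookup (P + Q) m * chi x m)"
    by (rule eval_superset) (auto simp: keys_add)
  also have "\<dots> = (\<Sum>m\<in>?S. Poly_Mapping.lookup P m * chi x m) + (\<Sum>m\<in>?S. Poly_Mapping.lookup Q m * chi x m)"
    by (simp add: lookup_add distrib_right sum.distrib)
  also have "\<dots> = eval_mpoly P x + eval_mpoly Q x"
    by (subst (1 2) eval_superset[of ?S]) auto
  finally show ?thesis .
qed

lemma eval_zero [simp]: "eval_mpoly 0 x = 0" unfolding eval_mpoly_def by simp

lemma eval_uminus: "eval_mpoly (- P) x = - eval_mpoly P x"
  unfolding eval_chi by (simp add: sum_negf)

lemma eval_diff: "eval_mpoly (P - Q) x = eval_mpoly P x - eval_mpoly Q x"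
  using eval_add[of P "- Q" x] eval_uminus[of Q x] by simp

lemma eval_sum: "eval_mpoly (sum f A) x = (\<Sum>a\<in>A. eval_mpoly (f a) x)"
  by (induction A rule: infinite_finite_induct) (auto simp: eval_add)

lemma eval_single: "eval_mpoly (Poly_Mapping.single a c) x = c * chi x a"
  unfolding eval_chi by auto

lemma sum_single_keys: "(\<Sum>a\<in>Poly_Mapping.keys P. Poly_Mapping.single a (Poly_Mapping.lookup P a)) = P"
proof (rule poly_mapping_eqI)
  fix k
  have "Poly_Mapping.lookup (\<Sum>a\<in>Poly_Mapping.keys P. Poly_Mapping.single a (Poly_Mapping.lookup P a)) k
     = (\<Sum>a\<in>Poly_Mapping.keys P. if a = k then Poly_Mapping.lookup P a else 0)"
    by (simp add: lookup_sum lookup_single when_def)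
  also have "\<dots> = Poly_Mapping.lookup P k" by (simp add: in_keys_iff)
  finally show "Poly_Mapping.lookup (\<Sum>a\<in>Poly_Mapping.keys P. Poly_Mapping.single a (Poly_Mapping.lookup P a)) k = Poly_Mapping.lookup P k" .
qed

lemma mult_expand: "(P::mpoly) * Q = (\<Sum>a\<in>Poly_Mapping.keys P. \<Sum>b\<in>Poly_Mapping.keys Q.
    Poly_Mapping.single (a + b) (Poly_Mapping.lookup P a * Poly_Mapping.lookup Q b))"
proof -
  have "P * Q = (\<Sum>a\<in>Poly_Mapping.keys P. Poly_Mapping.single a (Poly_Mapping.lookup P a)) *
     (\<Sum>b\<in>Poly_Mapping.keys Q. Poly_Mapping.single b (Poly_Mapping.lookup Q b))"
    by (simp only: sum_single_keys)
  also have "\<dots> = (\<Sum>a\<in>Poly_Mapping.keys P. \<Sum>b\<in>Poly_Mapping.keys Q.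
    Poly_Mapping.single (a + b) (Poly_Mapping.lookup P a * Poly_Mapping.lookup Q b))"
    by (simp add: sum_product mult_single)
  finally show ?thesis .
qed

lemma eval_mult: "eval_mpoly (P * Q) x = eval_mpoly P x * eval_mpoly Q x"
  unfolding mult_expand eval_sum eval_single chi_add
  by (simp add: eval_chi sum_product algebra_simps)

lemma Kpoly_zero: "Kpoly d 0" unfolding Kpoly_def by simp

lemma Kpoly_add: "Kpoly d P \<Longrightarrow> Kpoly d Q \<Longrightarrow> Kpoly d (P + Q)"
  unfolding Kpoly_def using keys_add[of P Q]
  by (auto simp: lookup_add algebraic_plus_times)

lemma Kpoly_uminus: "Kpoly d P \<Longrightarrow> Kpoly d (- P)"
  unfolding Kpoly_def by auto

lemma Kpoly_diff: "Kpoly d P \<Longrightarrow> Kpoly d Q \<Longrightarrow> Kpoly d (P - Q)"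
  using Kpoly_add[of d P "- Q"] Kpoly_uminus[of d Q] by simp

lemma Kpoly_sum: "(\<And>a. a \<in> A \<Longrightarrow> Kpoly d (f a)) \<Longrightarrow> Kpoly d (sum f A)"
  by (induction A rule: infinite_finite_induct) (auto simp: Kpoly_zero Kpoly_add)

lemma Kpoly_single: "mon_in_vars d a \<Longrightarrow> algebraic c \<Longrightarrow> Kpoly d (Poly_Mapping.single a c)"
  unfolding Kpoly_def by (auto simp: lookup_single when_def)

lemma mon_in_vars_add: "mon_in_vars d a \<Longrightarrow> mon_in_vars d b \<Longrightarrow> mon_in_vars d (a + b)"
  unfolding mon_in_vars_def using keys_add[of a b] by auto

lemma Kpoly_mult: "Kpoly d P \<Longrightarrow> Kpoly d Q \<Longrightarrow> Kpoly d (P * Q)"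
  unfolding mult_expand
  by (intro Kpoly_sum Kpoly_single mon_in_vars_add)
     (auto simp: Kpoly_def algebraic_plus_times)



definition ip :: "nat \<Rightarrow> (nat \<Rightarrow> int) \<Rightarrow> (nat \<Rightarrow> int) \<Rightarrow> int" where
  "ip d w w' = (\<Sum>i<d. w i * w' i)"

primrec phi :: "nat \<Rightarrow> (nat \<Rightarrow> nat \<Rightarrow> int) \<Rightarrow> nat \<Rightarrow> (nat \<Rightarrow> int) \<Rightarrow> (nat \<Rightarrow> int)" where
  "phi d v 0 = (\<lambda>u i. if i < d then u i else 0)"
| "phi d v (Suc k) = (if ip d (phi d v k (v k)) (phi d v k (v k)) = 0 then phi d v k
     else (\<lambda>u i. ip d (phi d v k (v k)) (phi d v k (v k)) * phi d v k u i
                 - ip d (phi d v k u) (phi d v k (v k)) * phi d v k (v k) i))"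

definition Sk :: "nat \<Rightarrow> (nat \<Rightarrow> nat \<Rightarrow> int) \<Rightarrow> (nat \<Rightarrow> int) set" where
  "Sk k v = {u. \<exists>c::int. c \<noteq> 0 \<and> (\<exists>a. (\<lambda>i. c * u i) = (\<lambda>i. \<Sum>j<k. a j * v j i))}"

lemma phi_zvec: "zvec d (phi d v k u)"
proof (induction k arbitrary: u)
  case 0 then show ?case by (simp add: zvec_def)
next
  case (Suc k) then show ?case by (simp add: zvec_def)
qed

lemma ip_lin: "ip d (\<lambda>i. a * u i + b * w i) w' = a * ip d u w' + b * ip d w w'"
  unfolding ip_def by (simp add: algebra_simps sum.distrib sum_distrib_left)

lemma phi_lin: "phi d v k (\<lambda>i. a * u i + b * w i) = (\<lambda>i. a * phi d v k u i + b * phi d v k w i)"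
proof (induction k arbitrary: u w)
  case 0 then show ?case by auto
next
  case (Suc k)
  let ?w = "phi d v k (v k)"
  let ?N = "ip d ?w ?w"
  show ?case
  proof (cases "?N = 0")
    case True
    then show ?thesis using Suc by simp
  next
    case False
    have "phi d v (Suc k) (\<lambda>i. a * u i + b * w i) j = a * phi d v (Suc k) u j + b * phi d v (Suc k) w j" for j
    proof -
      have "phi d v (Suc k) (\<lambda>i. a * u i + b * w i) j = ?N * (a * phi d v k u j + b * phi d v k w j)
          - (a * ip d (phi d v k u) ?w + b * ip d (phi d v k w) ?w) * ?w j"
        using False by (simp only: phi.simps if_False Suc ip_lin)
      also have "\<dots> = a * (?N * phi d v k u j - ip d (phi d v k u) ?w * ?w j) + b * (?N * phi d v k w j - ip d (phi d v k w) ?w * ?w j)"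
        by (simp add: algebra_simps)
      also have "\<dots> = a * phi d v (Suc k) u j + b * phi d v (Suc k) w j"
        using False by simp
      finally show ?thesis .
    qed
    then show ?thesis by auto
  qed
qed

lemma phi_zero: "phi d v k (\<lambda>i. 0) = (\<lambda>i. 0)"
  using phi_lin[of d v k 0 "\<lambda>i. 0" 0 "\<lambda>i. 0"] by simp

lemma phi_sum: "finite J \<Longrightarrow> phi d v k (\<lambda>i. \<Sum>j\<in>J. a j * f j i) = (\<lambda>i. \<Sum>j\<in>J. a j * phi d v k (f j) i)"
proof (induction J rule: finite_induct)
  case empty then show ?case by (simp add: phi_zero)
next
  case (insert x F)
  have "phi d v k (\<lambda>i. \<Sum>j\<in>insert x F. a j * f j i) = phi d v k (\<lambda>i. a x * f x i + 1 * (\<Sum>j\<in>F. a j * f j i))"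
    using insert by simp
  also have "\<dots> = (\<lambda>i. a x * phi d v k (f x) i + 1 * phi d v k (\<lambda>i. \<Sum>j\<in>F. a j * f j i) i)"
    by (rule phi_lin)
  finally show ?case using insert by simp
qed

lemma phi_smult: "phi d v k (\<lambda>i. c * u i) = (\<lambda>i. c * phi d v k u i)"
  using phi_lin[of d v k c u 0 u] by simp

lemma ip_self_zero: "zvec d w \<Longrightarrow> ip d w w = 0 \<Longrightarrow> w = (\<lambda>i. 0)"
proof -
  assume z: "zvec d w" and i: "ip d w w = 0"
  have "\<forall>i\<in>{..<d}. w i * w i = 0"
    using i unfolding ip_def by (subst (asm) sum_nonneg_eq_0_iff) auto
  then show ?thesis using z unfolding zvec_def by (auto simp: fun_eq_iff) (metis lessThan_iff not_less)
qed

lemma phi_kill: "j < k \<Longrightarrow> zvec d (v j) \<Longrightarrow> phi d v k (v j) = (\<lambda>i. 0)"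
proof (induction k)
  case 0 then show ?case by simp
next
  case (Suc k)
  show ?case
  proof (cases "j < k")
    case True
    then show ?thesis using Suc by (auto simp: ip_def)
  next
    case False
    then have jk: "j = k" using Suc by simp
    show ?thesis
    proof (cases "ip d (phi d v k (v k)) (phi d v k (v k)) = 0")
      case True
      then show ?thesis using jk ip_self_zero[OF phi_zvec True] by simp
    next
      case False
      then show ?thesis using jk by (auto simp: algebra_simps)
    qed
  qed
qed

lemma S_ker: "(\<forall>j<k. zvec d (v j)) \<Longrightarrow> u \<in> Sk k v \<Longrightarrow> phi d v k u = (\<lambda>i. 0)"
proof -
  assume z: "\<forall>j<k. zvec d (v j)" and u: "u \<in> Sk k v"
  then obtain c a where c: "c \<noteq> 0" "(\<lambda>i. c * u i) = (\<lambda>i. \<Sum>j<k. a j * v j i)"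
    unfolding Sk_def by auto
  have "(\<lambda>i. c * phi d v k u i) = phi d v k (\<lambda>i. \<Sum>j<k. a j * v j i)"
    using c(2) phi_smult by metis
  also have "\<dots> = (\<lambda>i. 0)" using z by (simp add: phi_sum phi_kill)
  finally show ?thesis using c(1) by (auto simp: fun_eq_iff)
qed

lemma ker_S: "(\<forall>j<k. zvec d (v j)) \<Longrightarrow> zvec d u \<Longrightarrow> phi d v k u = (\<lambda>i. 0) \<Longrightarrow> u \<in> Sk k v"
proof (induction k arbitrary: u)
  case 0
  then have "u = (\<lambda>i. 0)" by (simp add: fun_eq_iff zvec_def) (metis not_less)
  then show ?case unfolding Sk_def by (auto intro!: exI[of _ 1])
next
  case (Suc k)
  let ?w = "phi d v k (v k)"
  let ?N = "ip d ?w ?w"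
  show ?case
  proof (cases "?N = 0")
    case True
    have e: "phi d v (Suc k) = phi d v k" by (subst phi.simps(2), rule if_P[OF True])
    have "phi d v k u = (\<lambda>i. 0)" using Suc.prems(3) unfolding e .
    moreover have zk: "\<forall>j<k. zvec d (v j)" using Suc.prems(1) by simp
    ultimately have "u \<in> Sk k v" using Suc.IH[OF zk Suc.prems(2)] by blast
    then obtain c a where c: "c \<noteq> 0" "(\<lambda>i. c * u i) = (\<lambda>i. \<Sum>j<k. a j * v j i)"
      unfolding Sk_def by auto
    have "(\<lambda>i. c * u i) = (\<lambda>i. \<Sum>j<Suc k. (if j < k then a j else 0) * v j i)"
    proof
      fix i
      have "c * u i = (\<Sum>j<k. a j * v j i)" using fun_cong[OF c(2), of i] by simp
      then show "c * u i = (\<Sum>j<Suc k. (if j < k then a j else 0) * v j i)" by simp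
    qed
    then show ?thesis unfolding Sk_def using c(1) by (intro CollectI exI conjI)
  next
    case False
    define t where "t = ip d (phi d v k u) ?w"
    have eq: "\<And>i. ?N * phi d v k u i - t * ?w i = 0"
      using Suc.prems(3) False unfolding t_def by (simp add: fun_eq_iff)
    define u' where "u' = (\<lambda>i. ?N * u i + (- t) * v k i)"
    have "phi d v k u' = (\<lambda>i. 0)" unfolding u'_def phi_lin using eq by simp
    moreover have "zvec d u'" using Suc.prems unfolding u'_def zvec_def by simp
    ultimately have "u' \<in> Sk k v" using Suc by simp
    then obtain c a where c: "c \<noteq> 0" "(\<lambda>i. c * u' i) = (\<lambda>i. \<Sum>j<k. a j * v j i)"
      unfolding Sk_def by auto
    have "(\<lambda>i. (c * ?N) * u i) = (\<lambda>i. \<Sum>j<Suc k. (if j < k then a j else c * t) * v j i)"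
    proof
      fix i
      have "c * u' i = (\<Sum>j<k. a j * v j i)" using fun_cong[OF c(2), of i] by simp
      moreover have "(\<Sum>j<Suc k. (if j < k then a j else c * t) * v j i) = (\<Sum>j<k. a j * v j i) + c * t * v k i"
        by simp
      moreover have "c * u' i = (c * ?N) * u i - c * t * v k i"
        unfolding u'_def by (simp add: right_diff_distrib mult.assoc)
      ultimately show "(c * ?N) * u i = (\<Sum>j<Suc k. (if j < k then a j else c * t) * v j i)"
        by simp
    qed
    moreover have "c * ?N \<noteq> 0" using c(1) False by simp
    ultimately show ?thesis unfolding Sk_def by (intro CollectI exI conjI)
  qed
qed

lemma Sat_Sk: "Sat d (lattice_span k v) = {u. zvec d u \<and> u \<in> Sk k v}"
  unfolding Sat_def lattice_span_def Sk_def by auto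



lemma powi_prod: "(\<Prod>i\<in>A. f i) powi n = (\<Prod>i\<in>A. (f i :: rat) powi n)"
  by (induction A rule: infinite_finite_induct) (auto simp: power_int_mult_distrib)

lemma powi_sum: "(x::rat) \<noteq> 0 \<Longrightarrow> x powi (\<Sum>i\<in>A. e i) = (\<Prod>i\<in>A. x powi e i)"
  by (induction A rule: infinite_finite_induct) (auto simp: power_int_add)

lemma powi_split: "(x::rat) \<noteq> 0 \<Longrightarrow> x powi e = x ^ nat e / x ^ nat (- e)"
  by (cases "e \<ge> 0") (auto simp: power_int_def power_one_over inverse_eq_divide)

lemma primes_aux:
  fixes pr :: "nat \<Rightarrow> nat" and e :: "nat \<Rightarrow> int"
  assumes inj: "inj pr" and pr: "\<And>j. prime (pr j)"
    and eq: "(\<Prod>j<d. pr j ^ nat (e j)) = (\<Prod>j<d. pr j ^ nat (- e j))"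
    and j0: "j0 < d" "e j0 > 0"
  shows False
proof -
  have "pr j0 dvd pr j0 ^ nat (e j0)" using j0 by simp
  also have "\<dots> dvd (\<Prod>j<d. pr j ^ nat (e j))"
    using j0 by (intro dvd_prodI) auto
  finally have "pr j0 dvd (\<Prod>j<d. pr j ^ nat (e j))" .
  then have "pr j0 dvd (\<Prod>j<d. pr j ^ nat (- e j))" using eq by simp
  moreover have "pr j0 dvd (\<Prod>j<d. pr j ^ nat (- e j)) \<longleftrightarrow> (\<exists>j\<in>{..<d}. pr j0 dvd pr j ^ nat (- e j))"
    by (rule prime_dvd_prod_iff[OF finite_lessThan pr])
  ultimately have "\<exists>j\<in>{..<d}. pr j0 dvd pr j ^ nat (- e j)" by (rule rev_iffD1)
  then obtain j where j: "j < d" "pr j0 dvd pr j ^ nat (- e j)" by blast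
  have "nat (- e j) \<noteq> 0"
  proof
    assume "nat (- e j) = 0"
    then have "pr j0 dvd 1" using j(2) by (simp only: power_0)
    then have "pr j0 = 1" by (simp only: nat_dvd_1_iff_1)
    then show False using pr[of j0] by simp
  qed
  then have ne: "j \<noteq> j0" using j0 by auto
  have "pr j0 dvd pr j" using prime_dvd_power[OF pr j(2)] .
  then have "pr j0 = pr j" by (rule primes_dvd_imp_eq[OF pr pr])
  then have "j0 = j" by (rule injD[OF inj])
  then show False using ne by simp
qed

lemma primes_powi_one:
  fixes pr :: "nat \<Rightarrow> nat" and e :: "nat \<Rightarrow> int"
  assumes inj: "inj pr" and pr: "\<And>j. prime (pr j)"
    and one: "(\<Prod>j<d. (of_nat (pr j) :: rat) powi e j) = 1"
  shows "\<forall>j<d. e j = 0"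
proof -
  have nz: "(of_nat (pr j) :: rat) \<noteq> 0" for j using prime_gt_0_nat[OF pr[of j]] by simp
  define a where "a = (\<Prod>j<d. (of_nat (pr j) :: rat) ^ nat (e j))"
  define b where "b = (\<Prod>j<d. (of_nat (pr j) :: rat) ^ nat (- e j))"
  have "(\<Prod>j<d. (of_nat (pr j) :: rat) powi e j) =
     (\<Prod>j<d. (of_nat (pr j) :: rat) ^ nat (e j) / (of_nat (pr j) :: rat) ^ nat (- e j))"
    by (rule prod.cong[OF refl]) (rule powi_split[OF nz])
  also have "\<dots> = a / b" unfolding a_def b_def by (rule prod_dividef)
  finally have "a / b = 1" using one by simp
  then have ab: "a = b" by (simp only: divide_eq_1_iff)
  have "(of_nat (\<Prod>j<d. pr j ^ nat (e j)) :: rat) = of_nat (\<Prod>j<d. pr j ^ nat (- e j))"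
    using ab unfolding a_def b_def by (simp only: of_nat_prod of_nat_power)
  then have eq: "(\<Prod>j<d. pr j ^ nat (e j)) = (\<Prod>j<d. pr j ^ nat (- e j))"
    by (simp only: of_nat_eq_iff)
  show ?thesis
  proof (intro allI impI)
    fix j assume j: "j < d"
    show "e j = 0"
    proof (rule ccontr)
      assume "e j \<noteq> 0"
      then consider "e j > 0" | "- e j > 0" by linarith
      then show False
      proof cases
        case 1 then show False using primes_aux[OF inj pr eq j] by simp
      next
        case 2
        have eq2: "(\<Prod>j<d. pr j ^ nat (- e j)) = (\<Prod>j<d. pr j ^ nat (- (- e j)))"
          using eq by simp
        show False using primes_aux[OF inj pr eq2 j] 2 by simp
      qed
    qed
  qed
qed



definition delta :: "nat \<Rightarrow> nat \<Rightarrow> int" where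
  "delta i = (\<lambda>l. if l = i then 1 else 0)"

definition lamb :: "nat \<Rightarrow> nat \<Rightarrow> (nat \<Rightarrow> nat \<Rightarrow> int) \<Rightarrow> (nat \<Rightarrow> nat) \<Rightarrow> nat \<Rightarrow> rat" where
  "lamb d k v pr i = (\<Prod>j<d. (of_nat (pr j) :: rat) powi (phi d v k (delta i) j))"

definition Lam :: "nat \<Rightarrow> nat \<Rightarrow> (nat \<Rightarrow> nat \<Rightarrow> int) \<Rightarrow> (nat \<Rightarrow> nat) \<Rightarrow> (nat \<Rightarrow>\<^sub>0 nat) \<Rightarrow> rat" where
  "Lam d k v pr m = (\<Prod>i\<in>Poly_Mapping.keys m. lamb d k v pr i ^ Poly_Mapping.lookup m i)"

lemma lamb_nz: "(\<And>j. prime (pr j)) \<Longrightarrow> lamb d k v pr i \<noteq> 0"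
  unfolding lamb_def by (auto simp: prime_gt_0_nat power_int_not_zero)

lemma zvec_decomp: "zvec d u \<Longrightarrow> (\<lambda>l. \<Sum>i<d. u i * delta i l) = u"
proof
  fix l assume z: "zvec d u"
  have "(\<Sum>i<d. u i * delta i l) = (\<Sum>i<d. if i = l then u l else 0)"
    by (rule sum.cong) (auto simp: delta_def)
  also have "\<dots> = u l" using z unfolding zvec_def by (simp add: sum.delta')
  finally show "(\<Sum>i<d. u i * delta i l) = u l" .
qed

lemma K1:
  assumes pr: "\<And>j. prime (pr j)" and z: "zvec d u"
  shows "(\<Prod>i<d. lamb d k v pr i powi u i) = (\<Prod>j<d. (of_nat (pr j) :: rat) powi (phi d v k u j))"
proof -
  have nz: "(of_nat (pr j) :: rat) \<noteq> 0" for j using prime_gt_0_nat[OF pr[of j]] by simp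
  have ph: "phi d v k u j = (\<Sum>i<d. u i * phi d v k (delta i) j)" for j
  proof -
    have "phi d v k u = phi d v k (\<lambda>l. \<Sum>i<d. u i * delta i l)" using zvec_decomp[OF z] by simp
    also have "\<dots> = (\<lambda>j. \<Sum>i<d. u i * phi d v k (delta i) j)" by (rule phi_sum) simp
    finally show ?thesis by simp
  qed
  have "(\<Prod>i<d. lamb d k v pr i powi u i) = (\<Prod>i<d. \<Prod>j<d. (of_nat (pr j) :: rat) powi (phi d v k (delta i) j * u i))"
    unfolding lamb_def powi_prod power_int_mult ..
  also have "\<dots> = (\<Prod>j<d. \<Prod>i<d. (of_nat (pr j) :: rat) powi (u i * phi d v k (delta i) j))"
    by (subst prod.swap) (simp add: mult.commute)
  also have "\<dots> = (\<Prod>j<d. (of_nat (pr j) :: rat) powi (phi d v k u j))"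
    unfolding ph by (simp only: powi_sum[OF nz])
  finally show ?thesis .
qed

lemma Lam_vars: "mon_in_vars d m \<Longrightarrow> Lam d k v pr m = (\<Prod>i<d. lamb d k v pr i ^ Poly_Mapping.lookup m i)"
  unfolding Lam_def mon_in_vars_def by (rule prod.mono_neutral_left) (auto simp: in_keys_iff)

lemma exp_vec_zvec: "mon_in_vars d a \<Longrightarrow> mon_in_vars d b \<Longrightarrow> zvec d (exp_vec a b)"
  unfolding mon_in_vars_def zvec_def exp_vec_def
  by (metis (no_types, lifting) diff_self in_keys_iff lessThan_iff linorder_not_le subset_iff)

lemma K3:
  assumes inj: "inj pr" and pr: "\<And>j. prime (pr j)" and zv: "\<forall>j<k. zvec d (v j)"
    and a: "mon_in_vars d a" and b: "mon_in_vars d b"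
  shows "Lam d k v pr a = Lam d k v pr b \<longleftrightarrow> exp_vec a b \<in> Sat d (lattice_span k v)"
proof -
  let ?u = "exp_vec a b"
  have z: "zvec d ?u" by (rule exp_vec_zvec[OF a b])
  have lnz: "lamb d k v pr i \<noteq> 0" for i by (rule lamb_nz[OF pr])
  have bnz: "Lam d k v pr b \<noteq> 0" unfolding Lam_vars[OF b] using lnz by simp
  have "(\<Prod>i<d. lamb d k v pr i powi ?u i) = (\<Prod>i<d. lamb d k v pr i ^ Poly_Mapping.lookup a i / lamb d k v pr i ^ Poly_Mapping.lookup b i)"
    unfolding exp_vec_def by (rule prod.cong[OF refl]) (simp add: power_int_diff[OF disjI1[OF lnz]])
  also have "\<dots> = Lam d k v pr a / Lam d k v pr b"
    unfolding Lam_vars[OF a] Lam_vars[OF b] by (rule prod_dividef)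
  finally have eq: "Lam d k v pr a / Lam d k v pr b = (\<Prod>j<d. (of_nat (pr j) :: rat) powi (phi d v k ?u j))"
    unfolding K1[OF pr z] by simp
  have "Lam d k v pr a = Lam d k v pr b \<longleftrightarrow> Lam d k v pr a / Lam d k v pr b = 1"
    using bnz by (auto simp: divide_eq_1_iff)
  also have "\<dots> \<longleftrightarrow> (\<forall>j<d. phi d v k ?u j = 0)"
  proof
    assume "Lam d k v pr a / Lam d k v pr b = 1"
    then show "\<forall>j<d. phi d v k ?u j = 0" using primes_powi_one[OF inj pr] eq by simp
  next
    assume "\<forall>j<d. phi d v k ?u j = 0"
    then show "Lam d k v pr a / Lam d k v pr b = 1" unfolding eq by simp
  qed
  also have "\<dots> \<longleftrightarrow> phi d v k ?u = (\<lambda>i. 0)"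
    using phi_zvec[of d v k ?u] unfolding zvec_def by (auto simp: fun_eq_iff) (meson not_less)
  also have "\<dots> \<longleftrightarrow> ?u \<in> Sk k v" using S_ker[OF zv] ker_S[OF zv z] by blast
  also have "\<dots> \<longleftrightarrow> ?u \<in> Sat d (lattice_span k v)" unfolding Sat_Sk using z by simp
  finally show ?thesis .
qed



lemma geom_indep:
  fixes a :: "complex \<Rightarrow> complex"
  assumes "finite Z" "\<forall>n. (\<Sum>z\<in>Z. a z * z ^ n) = 0"
  shows "\<forall>z\<in>Z. a z = 0"
  using assms
proof (induction Z arbitrary: a rule: finite_induct)
  case empty then show ?case by simp
next
  case (insert z0 Z)
  let ?b = "\<lambda>z. a z * (z - z0)"
  have "\<forall>n. (\<Sum>z\<in>Z. ?b z * z ^ n) = 0"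
  proof
    fix n
    have "(\<Sum>z\<in>Z. ?b z * z ^ n) = (\<Sum>z\<in>Z. a z * z ^ Suc n) - z0 * (\<Sum>z\<in>Z. a z * z ^ n)"
      by (simp add: algebra_simps sum_subtractf sum_distrib_left)
    also have "\<dots> = ((\<Sum>z\<in>insert z0 Z. a z * z ^ Suc n) - a z0 * z0 ^ Suc n)
        - z0 * ((\<Sum>z\<in>insert z0 Z. a z * z ^ n) - a z0 * z0 ^ n)"
      using insert(1,2) by simp
    also have "\<dots> = 0"
    proof -
      have h1: "(\<Sum>z\<in>insert z0 Z. a z * z ^ Suc n) = 0" using insert(4) by blast
      have h0: "(\<Sum>z\<in>insert z0 Z. a z * z ^ n) = 0" using insert(4) by blast
      show ?thesis unfolding h1 h0 by (simp add: algebra_simps)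
    qed
    finally show "(\<Sum>z\<in>Z. ?b z * z ^ n) = 0" .
  qed
  then have b0: "\<forall>z\<in>Z. ?b z = 0" by (rule insert.IH)
  then have Z0: "\<forall>z\<in>Z. a z = 0" using insert(2) by auto
  have "(\<Sum>z\<in>insert z0 Z. a z * z ^ 0) = 0" using insert(4) by blast
  then have "a z0 = 0" using insert(1,2) Z0 by simp
  then show ?case using Z0 by simp
qed

lemma diag_pow:
  "mat d d (\<lambda>(i,j). if i = j then (f i :: rat) else 0) ^\<^sub>m n = mat d d (\<lambda>(i,j). if i = j then f i ^ n else 0)"
proof (induction n)
  case 0 then show ?case by (auto simp: one_mat_def)
next
  case (Suc n)
  show ?case
  proof (rule eq_matI)
    fix i j assume ij: "i < dim_row (mat d d (\<lambda>(i,j). if i = j then f i ^ Suc n else 0 :: rat))"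
       "j < dim_col (mat d d (\<lambda>(i,j). if i = j then f i ^ Suc n else 0 :: rat))"
    then have i: "i < d" and j: "j < d" by auto
    have "(mat d d (\<lambda>(i,j). if i = j then (f i :: rat) else 0) ^\<^sub>m Suc n) $$ (i, j)
      = (\<Sum>l<d. (if i = l then f i ^ n else 0) * (if l = j then f l else 0))"
      unfolding pow_mat.simps Suc using i j
      by (simp add: scalar_prod_def row_def col_def atLeast0LessThan)
    also have "\<dots> = (\<Sum>l<d. if l = i then (if i = j then f i ^ Suc n else 0) else 0)"
      by (rule sum.cong) (auto simp: mult.commute)
    also have "\<dots> = (if i = j then f i ^ Suc n else 0)"
      using i by (simp add: sum.delta)
    finally show "(mat d d (\<lambda>(i,j). if i = j then (f i :: rat) else 0) ^\<^sub>m Suc n) $$ (i, j) =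
       mat d d (\<lambda>(i,j). if i = j then f i ^ Suc n else 0) $$ (i, j)" using i j by simp
  qed auto
qed

lemma diag_pow_vec:
  "i < d \<Longrightarrow> (mat d d (\<lambda>(i,j). if i = j then (f i :: rat) else 0) ^\<^sub>m n *\<^sub>v vec d (\<lambda>_. 1)) $ i = f i ^ n"
  unfolding diag_pow by (simp add: scalar_prod_def row_def atLeast0LessThan sum.delta)



theorem theorem3p7:
  fixes d k :: nat and \<alpha> \<beta> :: "nat \<Rightarrow> (nat \<Rightarrow>\<^sub>0 nat)"
  assumes "\<forall>j<k. mon_in_vars d (\<alpha> j) \<and> mon_in_vars d (\<beta> j)"
  shows "\<exists>M s. M \<in> carrier_mat d d \<and> diagonal_mat M \<and> s \<in> carrier_vec d \<and>
           invariant_ideal d M s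
             = lattice_ideal d (Sat d (lattice_span k (\<lambda>j. exp_vec (\<alpha> j) (\<beta> j))))"
proof -
  define v where "v = (\<lambda>j. exp_vec (\<alpha> j) (\<beta> j))"
  have zv: "\<forall>j<k. zvec d (v j)" using assms unfolding v_def by (auto intro: exp_vec_zvec)
  obtain pr :: "nat \<Rightarrow> nat" where inj: "inj pr" and prr: "range pr \<subseteq> {p. prime p}"
    using infinite_countable_subset[OF primes_infinite] by blast
  have pr: "\<And>j. prime (pr j)" using prr by auto
  define lam where "lam = lamb d k v pr"
  define M where "M = mat d d (\<lambda>(i,j). if i = j then lam i else 0)"
  define s where "s = vec d (\<lambda>_. 1::rat)"
  define x where "x n = (\<lambda>i. if i < d then of_rat ((M ^\<^sub>m n *\<^sub>v s) $ i) else (0::complex))" for n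
  define L where "L = Lam d k v pr"
  define G where "G = {monom a - monom b | a b. mon_in_vars d a \<and> mon_in_vars d b \<and>
      exp_vec a b \<in> Sat d (lattice_span k v)}"
  have K5: "chi (x n) m = of_rat (L m) ^ n" if m: "mon_in_vars d m" for m n
  proof -
    have "chi (x n) m = (\<Prod>i\<in>Poly_Mapping.keys m. (of_rat (lam i) ^ n) ^ Poly_Mapping.lookup m i)"
      unfolding chi_def
    proof (rule prod.cong[OF refl])
      fix i assume "i \<in> Poly_Mapping.keys m"
      then have i: "i < d" using m unfolding mon_in_vars_def by auto
      show "x n i ^ Poly_Mapping.lookup m i = (of_rat (lam i) ^ n) ^ Poly_Mapping.lookup m i"
      proof -
        have "(M ^\<^sub>m n *\<^sub>v s) $ i = lam i ^ n" unfolding M_def s_def by (rule diag_pow_vec[OF i])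
        then show ?thesis using i by (simp add: x_def of_rat_power)
      qed
    qed
    also have "\<dots> = (\<Prod>i\<in>Poly_Mapping.keys m. of_rat (lam i) ^ Poly_Mapping.lookup m i) ^ n"
      by (simp add: prod_power_distrib flip: power_mult) (simp add: mult.commute)
    also have "\<dots> = of_rat (L m) ^ n" unfolding L_def Lam_def lam_def by (simp add: of_rat_prod of_rat_power)
    finally show ?thesis .
  qed
  have LG: "L a = L b \<longleftrightarrow> exp_vec a b \<in> Sat d (lattice_span k v)"
    if "mon_in_vars d a" "mon_in_vars d b" for a b
    unfolding L_def by (rule K3[OF inj pr zv that])
  have inv: "invariant_ideal d M s = {P. Kpoly d P \<and> (\<forall>n. eval_mpoly P (x n) = 0)}"
    unfolding invariant_ideal_def x_def by simp
  have evalK: "eval_mpoly P (x n) = (\<Sum>m\<in>Poly_Mapping.keys P. Poly_Mapping.lookup P m * of_rat (L m) ^ n)"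
    if "Kpoly d P" for P n
    unfolding eval_chi using K5 that unfolding Kpoly_def by simp
  have Gprop: "Kpoly d g \<and> (\<forall>n. eval_mpoly g (x n) = 0)" if "g \<in> G" for g
  proof -
    obtain a b where g: "g = monom a - monom b" and ab: "mon_in_vars d a" "mon_in_vars d b"
      "exp_vec a b \<in> Sat d (lattice_span k v)"
      using \<open>g \<in> G\<close> unfolding G_def by blast
    have "Kpoly d g" unfolding g monom_def by (intro Kpoly_diff Kpoly_single ab) auto
    moreover have "eval_mpoly g (x n) = 0" for n
      unfolding g monom_def eval_diff eval_single K5[OF ab(1)] K5[OF ab(2)]
      using LG[OF ab(1,2)] ab(3) by simp
    ultimately show ?thesis by blast
  qed
  show ?thesis
  proof (intro exI conjI)
    show "M \<in> carrier_mat d d" unfolding M_def by simp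
    show "diagonal_mat M" unfolding M_def diagonal_mat_def by simp
    show "s \<in> carrier_vec d" unfolding s_def by simp
    show "invariant_ideal d M s = lattice_ideal d (Sat d (lattice_span k (\<lambda>j. exp_vec (\<alpha> j) (\<beta> j))))"
      unfolding v_def[symmetric] lattice_ideal_def G_def[symmetric] inv
    proof (intro equalityI subsetI)
      fix P assume "P \<in> gen_ideal d G"
      then obtain N :: nat and q g where qg: "\<forall>i<N. Kpoly d (q i) \<and> g i \<in> G" and P: "P = (\<Sum>i<N. q i * g i)"
        unfolding gen_ideal_def by auto
      have "Kpoly d P" unfolding P using qg Gprop by (intro Kpoly_sum Kpoly_mult) auto
      moreover have "eval_mpoly P (x n) = 0" for n
        unfolding P eval_sum eval_mult using qg Gprop by simp
      ultimately show "P \<in> {P. Kpoly d P \<and> (\<forall>n. eval_mpoly P (x n) = 0)}" by blast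
    next
      fix P assume "P \<in> {P. Kpoly d P \<and> (\<forall>n. eval_mpoly P (x n) = 0)}"
      then have KP: "Kpoly d P" and van0: "\<forall>n. eval_mpoly P (x n) = 0" by auto
      define K where "K = Poly_Mapping.keys P"
      define c where "c = Poly_Mapping.lookup P"
      have finK: "finite K" unfolding K_def by simp
      have Kvars: "m \<in> K \<Longrightarrow> mon_in_vars d m" for m using KP unfolding Kpoly_def K_def by auto
      have calg: "algebraic (c m)" for m using KP unfolding Kpoly_def c_def by auto
      have van: "\<forall>n. (\<Sum>m\<in>K. c m * of_rat (L m) ^ n) = 0"
        using van0 evalK[OF KP] unfolding K_def c_def by simp
      have group: "(\<Sum>m\<in>{m\<in>K. L m = L m0}. c m) = 0" if m0: "m0 \<in> K" for m0
      proof -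
        define h where "h m = (of_rat (L m) :: complex)" for m
        define a where "a z = (\<Sum>m\<in>{m\<in>K. h m = z}. c m)" for z
        have "\<forall>n. (\<Sum>z\<in>h ` K. a z * z ^ n) = 0"
        proof
          fix n
          have "(\<Sum>m\<in>K. c m * of_rat (L m) ^ n) = (\<Sum>z\<in>h ` K. \<Sum>m\<in>{m. m \<in> K \<and> h m = z}. c m * h m ^ n)"
            unfolding h_def by (rule sum.image_gen[OF finK])
          also have "\<dots> = (\<Sum>z\<in>h ` K. a z * z ^ n)"
            unfolding a_def by (rule sum.cong[OF refl]) (simp add: sum_distrib_right)
          finally show "(\<Sum>z\<in>h ` K. a z * z ^ n) = 0" using van by simp
        qed
        then have "\<forall>z\<in>h ` K. a z = 0" by (intro geom_indep) (use finK in auto)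
        then have "a (h m0) = 0" using m0 by blast
        moreover have "{m\<in>K. h m = h m0} = {m\<in>K. L m = L m0}" unfolding h_def by simp
        ultimately show ?thesis unfolding a_def by simp
      qed
      define r where "r m = (SOME m'. m' \<in> K \<and> L m' = L m)" for m
      have rK: "r m \<in> K \<and> L (r m) = L m" if "m \<in> K" for m
        unfolding r_def by (rule someI[of _ m]) (use that in simp)
      have r_eq: "r m = r m' \<longleftrightarrow> L m = L m'" if "m \<in> K" "m' \<in> K" for m m'
      proof
        assume "r m = r m'"
        then show "L m = L m'" using rK[OF that(1)] rK[OF that(2)] by metis
      next
        assume "L m = L m'"
        then show "r m = r m'" unfolding r_def by simp
      qed
      have sum0: "(\<Sum>m\<in>K. Poly_Mapping.single (r m) (c m)) = 0"
      proof (rule poly_mapping_eqI)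
        fix \<rho>
        have "Poly_Mapping.lookup (\<Sum>m\<in>K. Poly_Mapping.single (r m) (c m)) \<rho> = (\<Sum>m\<in>K. if r m = \<rho> then c m else 0)"
          by (simp add: lookup_sum lookup_single when_def)
        also have "\<dots> = 0"
        proof (cases "\<exists>m0\<in>K. r m0 = \<rho>")
          case True
          then obtain m0 where m0: "m0 \<in> K" "r m0 = \<rho>" by blast
          have "(\<Sum>m\<in>K. if r m = \<rho> then c m else 0) = (\<Sum>m\<in>K. if L m = L m0 then c m else 0)"
            by (rule sum.cong[OF refl]) (use m0 r_eq in metis)
          also have "\<dots> = (\<Sum>m\<in>{m\<in>K. L m = L m0}. c m)" by (rule sum.inter_filter[symmetric, OF finK])
          also have "\<dots> = 0" by (rule group[OF m0(1)])
          finally show ?thesis .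
        next
          case False
          then show ?thesis by (intro sum.neutral) auto
        qed
        finally show "Poly_Mapping.lookup (\<Sum>m\<in>K. Poly_Mapping.single (r m) (c m)) \<rho> = Poly_Mapping.lookup 0 \<rho>"
          by simp
      qed
      have Pexp: "P = (\<Sum>m\<in>K. Poly_Mapping.single 0 (c m) * (monom m - monom (r m)))"
      proof -
        have "(\<Sum>m\<in>K. Poly_Mapping.single 0 (c m) * (monom m - monom (r m)))
            = (\<Sum>m\<in>K. Poly_Mapping.single m (c m)) - (\<Sum>m\<in>K. Poly_Mapping.single (r m) (c m))"
          unfolding monom_def by (simp add: right_diff_distrib mult_single sum_subtractf)
        also have "\<dots> = P" using sum0 sum_single_keys[of P] unfolding K_def c_def by simp
        finally show ?thesis by simp
      qed
      obtain f where f: "bij_betw f {0..<card K} K" using ex_bij_betw_nat_finite[OF finK] by blast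
      define q where "q i = (Poly_Mapping.single 0 (c (f i)) :: mpoly)" for i
      define g where "g i = monom (f i) - monom (r (f i))" for i
      have "P = (\<Sum>i<card K. q i * g i)"
        unfolding Pexp q_def g_def
        using sum.reindex_bij_betw[OF f, of "\<lambda>m. Poly_Mapping.single 0 (c m) * (monom m - monom (r m))"]
        by (simp add: atLeast0LessThan)
      moreover have "\<forall>i<card K. Kpoly d (q i) \<and> g i \<in> G"
      proof (intro allI impI conjI)
        fix i assume "i < card K"
        then have fi: "f i \<in> K" using f unfolding bij_betw_def by auto
        show "Kpoly d (q i)" unfolding q_def
          by (rule Kpoly_single) (auto simp: mon_in_vars_def calg)
        have "mon_in_vars d (f i)" "mon_in_vars d (r (f i))" using Kvars fi rK[OF fi] by auto
        moreover have "exp_vec (f i) (r (f i)) \<in> Sat d (lattice_span k v)"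
          using LG[OF calculation] rK[OF fi] by simp
        ultimately show "g i \<in> G" unfolding g_def G_def by blast
      qed
      ultimately show "P \<in> gen_ideal d G" unfolding gen_ideal_def by blast
    qed
  qed
qed

end
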